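(* Let $G=(F\cup C,E)$ be a finite bipartite graph with $F\neq\emptyset$ and no isolated vertices. In one iteration of FacilitySelect on $G$, the expected number of clients removed is at least $|E|/|F|$.
   Context: Let $G=(F\cup C,E)$ be a finite bipartite graph with parts $F$ (facilities) and $C$ (clients). The facility graph $G_F=(F,E_F)$ has an edge $\{i,i'\}$ ($i\ne i'$) iff $i$ and $i'$ have a common neighbor in $G$. Write $\deg(\cdot)$, $N(\cdot)$ for degree/neighborhood in $G$, $\deg_F(\cdot)$, $N_F(\cdot)$ for those in $G_F$. One iteration of FacilitySelect: every $i\in F$ independently draws $r_i$ uniformly from $[0,1]$; let $I=\{i\in F: r_i>\max_{i'\in N_F(i)} r_{i'}\}$ (the maximum over the empty set being $-\infty$); then all vertices of $I\cup N(I)$ are deleted from $G$ together with all their incident edges. "Clients removed" are the clients in $N(I)$; "edges removed" are the edges incident to deleted vertices. FacilitySelect repeats iterations while $F\ne\emptyset$. *)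

theory Defs
  imports "HOL-Probability.Probability"
begin

definition bip_graph :: "'f set \<Rightarrow> 'c set \<Rightarrow> ('f \<times> 'c) set \<Rightarrow> bool" where
  "bip_graph F C E \<longleftrightarrow> finite F \<and> finite C \<and> E \<subseteq> F \<times> C"

definition no_isolated :: "'f set \<Rightarrow> 'c set \<Rightarrow> ('f \<times> 'c) set \<Rightarrow> bool" where
  "no_isolated F C E \<longleftrightarrow> (\<forall>i\<in>F. \<exists>j. (i, j) \<in> E) \<and> (\<forall>j\<in>C. \<exists>i. (i, j) \<in> E)"

definition fac_nbrs :: "'f set \<Rightarrow> ('f \<times> 'c) set \<Rightarrow> 'f \<Rightarrow> 'f set" where
  "fac_nbrs F E i = {i' \<in> F. i' \<noteq> i \<and> (\<exists>j. (i, j) \<in> E \<and> (i', j) \<in> E)}"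

text \<open>The set I of one FacilitySelect iteration, for random values r
  (maximum over the empty set is -\<infinity>, so isolated vertices of G_F are selected).\<close>
definition selected :: "'f set \<Rightarrow> ('f \<times> 'c) set \<Rightarrow> ('f \<Rightarrow> real) \<Rightarrow> 'f set" where
  "selected F E r = {i \<in> F. \<forall>i' \<in> fac_nbrs F E i. r i' < r i}"

definition clients_removed :: "'f set \<Rightarrow> ('f \<times> 'c) set \<Rightarrow> ('f \<Rightarrow> real) \<Rightarrow> 'c set" where
  "clients_removed F E r = {j. \<exists>i \<in> selected F E r. (i, j) \<in> E}"

definition rand_space :: "'f set \<Rightarrow> ('f \<Rightarrow> real) measure" where
  "rand_space F = PiM F (\<lambda>_. uniform_measure lborel {0..1::real})"

end

theory Submission imports Defs begin

abbreviation "U \<equiv> uniform_measure lborel {0..1::real}"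

lemma U_prob: "prob_space U"
  by (intro prob_space_uniform_measure) auto

lemma U_prod: "product_prob_space (\<lambda>_::'f. U)"
  by (intro product_prob_spaceI U_prob)

lemma U_less: "emeasure U {..<y} = ennreal (max 0 (min y 1))"
proof -
  have "emeasure U {..<y} = emeasure lborel ({0..1} \<inter> {..<y})" by (simp add: divide_ennreal_def)
  also have "\<dots> = ennreal (max 0 (min y 1))"
  proof (cases "y < 0")
    case True then have "{0..1} \<inter> {..<y} = {}" by auto
    then show ?thesis using True by simp
  next
    case False
    show ?thesis
    proof (cases "y \<le> 1")
      case True
      then have "{0..1} \<inter> {..<y} = {0..<y}" by auto
      then show ?thesis using True False by simp
    next
      case f2: False
      then have "{0..1} \<inter> {..<y} = {0..1}" by auto
      then show ?thesis using f2 False by simp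
    qed
  qed
  finally show ?thesis .
qed

lemma meas1: "finite N \<Longrightarrow> N \<subseteq> F \<Longrightarrow> i \<in> F \<Longrightarrow> {r \<in> space (PiM F (\<lambda>_. U)). \<forall>i'\<in>N. r i' < r i} \<in> sets (PiM F (\<lambda>_. U))"
  by (measurable, auto)

lemma prob_max:
  fixes F :: "'f set"
  assumes fin: "finite F" and iF: "i \<in> F" and NF: "N \<subseteq> F - {i}"
  shows "emeasure (PiM F (\<lambda>_. U)) {r \<in> space (PiM F (\<lambda>_. U)). \<forall>i'\<in>N. r i' < r i}
     = ennreal (1 / (card N + 1))"
proof -
  interpret P: product_prob_space "\<lambda>_::'f. U" by (rule U_prod)
  define I where "I = F - {i}"
  have FI: "F = insert i I" "i \<notin> I" "finite I" using iF fin by (auto simp: I_def)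
  have NI: "N \<subseteq> I" using NF by (simp add: I_def)
  have fN: "finite N" using NI FI(3) finite_subset by blast
  let ?S = "{r \<in> space (PiM F (\<lambda>_. U)). \<forall>i'\<in>N. r i' < r i}"
  have Ssets: "?S \<in> sets (PiM F (\<lambda>_. U))" using meas1[OF fN _ iF] NF by auto
  have "emeasure (PiM F (\<lambda>_. U)) ?S = (\<integral>\<^sup>+r. indicator ?S r \<partial>PiM (insert i I) (\<lambda>_. U))"
    using Ssets FI by simp
  also have "\<dots> = (\<integral>\<^sup>+x. \<integral>\<^sup>+y. indicator ?S (x(i:=y)) \<partial>U \<partial>PiM I (\<lambda>_. U))"
    by (rule P.product_nn_integral_insert) (use FI Ssets in auto)
  also have "\<dots> = (\<integral>\<^sup>+x. \<integral>\<^sup>+y. (if \<forall>i'\<in>N. x i' < y then 1 else 0) \<partial>U \<partial>PiM I (\<lambda>_. U))"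
  proof (intro nn_integral_cong)
    fix x y assume x: "x \<in> space (PiM I (\<lambda>_. U))"
    have "x(i:=y) \<in> space (PiM F (\<lambda>_. U))" using x FI by (auto simp: space_PiM PiE_iff)
    moreover have "i' \<in> N \<Longrightarrow> i' \<noteq> i" for i' using NF by auto
    ultimately show "indicator ?S (x(i:=y)) = (if \<forall>i'\<in>N. x i' < y then 1 else (0::ennreal))"
      by (auto simp: indicator_def)
  qed
  also have "\<dots> = (\<integral>\<^sup>+y. \<integral>\<^sup>+x. (if \<forall>i'\<in>N. x i' < y then 1 else 0) \<partial>PiM I (\<lambda>_. U) \<partial>U)"
  proof -
    have pp: "prob_space (PiM I (\<lambda>_. U))" by (intro prob_space_PiM U_prob)
    interpret Q: pair_sigma_finite "PiM I (\<lambda>_. U)" U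
      by (intro pair_sigma_finite.intro prob_space_imp_sigma_finite pp U_prob)
    have sm[measurable]: "snd \<in> borel_measurable (PiM I (\<lambda>_. U) \<Otimes>\<^sub>M U)"
      using measurable_snd[of "PiM I (\<lambda>_. U)" U] measurable_cong_sets[of _ _ U borel] by simp
    show ?thesis
      by (rule Q.Fubini'[symmetric]) (measurable, use NI fN in auto)
  qed
  also have "\<dots> = (\<integral>\<^sup>+y. ennreal (max 0 (min y 1) ^ card N) \<partial>U)"
  proof (intro nn_integral_cong)
    fix y :: real
    let ?A = "\<lambda>i'. if i' \<in> N then {..<y} else UNIV"
    have "(\<integral>\<^sup>+x. (if \<forall>i'\<in>N. x i' < y then 1 else 0) \<partial>PiM I (\<lambda>_. U))
        = (\<integral>\<^sup>+x. indicator (PiE I ?A) x \<partial>PiM I (\<lambda>_. U))"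
      by (intro nn_integral_cong) (use NI in \<open>auto simp: space_PiM PiE_iff indicator_def\<close>)
    also have "\<dots> = emeasure (PiM I (\<lambda>_. U)) (PiE I ?A)"
      by (intro nn_integral_indicator sets_PiM_I_finite) (auto simp: FI)
    also have "\<dots> = (\<Prod>i'\<in>I. emeasure U (?A i'))"
      by (intro P.emeasure_PiM) (auto simp: FI)
    also have "\<dots> = (\<Prod>i'\<in>I. if i' \<in> N then ennreal (max 0 (min y 1)) else 1)"
      using prob_space.emeasure_space_1[OF U_prob] by (intro prod.cong) (auto simp del: emeasure_uniform_measure simp: U_less)
    also have "\<dots> = ennreal (max 0 (min y 1)) ^ card N"
      using NI FI(3) by (simp add: prod.If_cases Int_absorb1)
    also have "\<dots> = ennreal (max 0 (min y 1) ^ card N)" by (rule ennreal_power) auto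
    finally show "(\<integral>\<^sup>+x. (if \<forall>i'\<in>N. x i' < y then 1 else 0) \<partial>PiM I (\<lambda>_. U)) = ennreal (max 0 (min y 1) ^ card N)" .
  qed
  also have "\<dots> = (\<integral>\<^sup>+y. ennreal (y ^ card N) * indicator {0..1} y \<partial>lborel)"
    by (subst nn_integral_uniform_measure) (auto simp: divide_ennreal_def intro!: nn_integral_cong split: split_indicator)
  also have "\<dots> = ennreal (1 / (card N + 1))"
  proof -
    have "(\<integral>\<^sup>+y. ennreal (y ^ card N) * indicator {0..1} y \<partial>lborel)
       = (\<lambda>y. y ^ Suc (card N) / Suc (card N)) 1 - (\<lambda>y. y ^ Suc (card N) / Suc (card N)) 0"
    proof (rule nn_integral_FTC_Icc)
      fix x :: real
      have "((\<lambda>y. y ^ Suc (card N) / real (Suc (card N))) has_real_derivative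
             (real (Suc (card N)) * x ^ (Suc (card N) - Suc 0)) / real (Suc (card N))) (at x)"
        by (intro DERIV_cdivide DERIV_pow)
      then show "((\<lambda>y. y ^ Suc (card N) / real (Suc (card N))) has_real_derivative x ^ card N) (at x)"
        by simp
    qed auto
    then show ?thesis by simp
  qed
  finally show ?thesis .
qed

theorem lemma3:
  fixes F :: "'f set" and C :: "'c set" and E :: "('f \<times> 'c) set"
  assumes "bip_graph F C E" and "F \<noteq> {}" and "no_isolated F C E"
  shows "(\<integral>r. real (card (clients_removed F E r)) \<partial>rand_space F)
           \<ge> real (card E) / real (card F)"
proof -
  have finF: "finite F" and finC: "finite C" and EFC: "E \<subseteq> F \<times> C"
    using assms(1) by (auto simp: bip_graph_def)
  have finE: "finite E" using finite_subset[OF EFC] finF finC by blast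
  let ?P = "rand_space F"
  interpret prob_space ?P unfolding rand_space_def by (intro prob_space_PiM U_prob)
  define d where "d i = card {j. (i,j) \<in> E}" for i
  have fin_nb: "finite {j. (i,j) \<in> E}" for i
    using finite_subset[of "{j. (i,j) \<in> E}" "snd ` E"] finE by force
  define A where "A i = {r \<in> space ?P. \<forall>i'\<in>fac_nbrs F E i. r i' < r i}" for i
  have nbF: "fac_nbrs F E i \<subseteq> F - {i}" for i by (auto simp: fac_nbrs_def)
  have finnb: "finite (fac_nbrs F E i)" for i using finite_subset[OF nbF] finF by blast
  have Asets: "A i \<in> sets ?P" if "i \<in> F" for i
    unfolding A_def rand_space_def using meas1[OF finnb _ that, of i] nbF by auto
  have selF: "selected F E r \<subseteq> F" for r by (auto simp: selected_def)
  have card_eq: "real (card (clients_removed F E r)) = (\<Sum>i\<in>F. real (d i) * indicator {r. i \<in> selected F E r} r)" for r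
  proof -
    have "clients_removed F E r = (\<Union>i\<in>selected F E r. {j. (i,j) \<in> E})"
      by (auto simp: clients_removed_def)
    moreover have "card (\<Union>i\<in>selected F E r. {j. (i,j) \<in> E}) = (\<Sum>i\<in>selected F E r. d i)"
      unfolding d_def
    proof (rule card_UN_disjoint)
      show "finite (selected F E r)" using finite_subset[OF selF finF] .
      show "\<forall>i\<in>selected F E r. finite {j. (i, j) \<in> E}" using fin_nb by blast
      show "\<forall>i\<in>selected F E r. \<forall>i'\<in>selected F E r. i \<noteq> i' \<longrightarrow> {j. (i, j) \<in> E} \<inter> {j. (i', j) \<in> E} = {}"
      proof (intro ballI impI)
        fix i i' assume a: "i \<in> selected F E r" "i' \<in> selected F E r" "i \<noteq> i'"
        show "{j. (i, j) \<in> E} \<inter> {j. (i', j) \<in> E} = {}"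
        proof (rule ccontr)
          assume "{j. (i, j) \<in> E} \<inter> {j. (i', j) \<in> E} \<noteq> {}"
          then obtain j where j: "(i,j) \<in> E" "(i',j) \<in> E" by auto
          have "i' \<in> fac_nbrs F E i" "i \<in> fac_nbrs F E i'"
            using a j selF by (auto simp: fac_nbrs_def)
          then have "r i' < r i" "r i < r i'" using a by (auto simp: selected_def)
          then show False by simp
        qed
      qed
    qed
    moreover have "(\<Sum>i\<in>selected F E r. real (d i)) = (\<Sum>i\<in>F. real (d i) * indicator {r. i \<in> selected F E r} r)"
    proof -
      have "(\<Sum>i\<in>selected F E r. real (d i)) = (\<Sum>i\<in>F \<inter> selected F E r. real (d i))"
        using selF by (simp add: Int_absorb1)
      also have "\<dots> = (\<Sum>i\<in>F. if i \<in> selected F E r then real (d i) else 0)"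
        by (rule sum.inter_restrict[OF finF])
      also have "\<dots> = (\<Sum>i\<in>F. real (d i) * indicator {r. i \<in> selected F E r} r)"
        by (intro sum.cong refl) (simp add: indicator_def)
      finally show ?thesis .
    qed
    ultimately show ?thesis by simp
  qed
  have "(\<integral>r. real (card (clients_removed F E r)) \<partial>?P) = (\<integral>r. (\<Sum>i\<in>F. real (d i) * indicator (A i) r) \<partial>?P)"
  proof (rule Bochner_Integration.integral_cong[OF refl])
    fix r assume r: "r \<in> space ?P"
    have "indicator {r. i \<in> selected F E r} r = (indicator (A i) r :: real)" if "i \<in> F" for i
      using r that by (auto simp: A_def selected_def indicator_def)
    then show "real (card (clients_removed F E r)) = (\<Sum>i\<in>F. real (d i) * indicator (A i) r)"
      by (simp add: card_eq)
  qed
  also have "\<dots> = (\<Sum>i\<in>F. real (d i) * measure ?P (A i))"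
  proof -
    have int: "integrable ?P (\<lambda>r. real (d i) * indicator (A i) r)" if "i \<in> F" for i
      using Asets[OF that] by (intro integrable_mult_right integrable_real_indicator) (auto simp: emeasure_finite less_top[symmetric])
    have "(\<integral>r. (\<Sum>i\<in>F. real (d i) * indicator (A i) r) \<partial>?P) = (\<Sum>i\<in>F. \<integral>r. real (d i) * indicator (A i) r \<partial>?P)"
      by (rule Bochner_Integration.integral_sum) (rule int)
    also have "\<dots> = (\<Sum>i\<in>F. real (d i) * measure ?P (A i))"
    proof (rule sum.cong[OF refl])
      fix i assume "i \<in> F"
      then show "(\<integral>r. real (d i) * indicator (A i) r \<partial>?P) = real (d i) * measure ?P (A i)"
        using Asets by (simp add: emeasure_finite)
    qed
    finally show ?thesis .
  qed
  also have "\<dots> \<ge> (\<Sum>i\<in>F. real (d i) * (1 / real (card F)))"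
  proof (rule sum_mono)
    fix i assume i: "i \<in> F"
    have "emeasure ?P (A i) = ennreal (1 / (card (fac_nbrs F E i) + 1))"
      unfolding A_def rand_space_def by (rule prob_max[OF finF i nbF])
    then have m: "measure ?P (A i) = 1 / (card (fac_nbrs F E i) + 1)"
      by (simp add: measure_def)
    have "card (fac_nbrs F E i) \<le> card (F - {i})" by (intro card_mono nbF) (use finF in auto)
    also have "\<dots> = card F - 1" using i finF by simp
    finally have c1: "card (fac_nbrs F E i) \<le> card F - 1" .
    have c2: "card F > 0" using i finF card_gt_0_iff by blast
    have "real (card (fac_nbrs F E i) + 1) \<le> real (card F)" using c1 c2 by linarith
    then have "1 / real (card F) \<le> measure ?P (A i)" unfolding m
      by (intro divide_left_mono) auto
    then show "real (d i) * (1 / real (card F)) \<le> real (d i) * measure ?P (A i)"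
      by (intro mult_left_mono) auto
  qed
  also have "(\<Sum>i\<in>F. real (d i) * (1 / real (card F))) = real (card E) / real (card F)"
  proof -
    have "E = (SIGMA i:F. {j. (i,j) \<in> E})" using EFC by auto
    then have "card E = (\<Sum>i\<in>F. d i)" unfolding d_def
      using card_SigmaI[OF finF, of "\<lambda>i. {j. (i,j) \<in> E}"] fin_nb by simp
    then show ?thesis by (simp add: sum_divide_distrib)
  qed
  finally show ?thesis .
qed
end
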